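(* The action of $L$ on $V(G_{E_8})$ has exactly 15 orbits, each of size 8, and each orbit is a clique of size 8 in $G_{E_8}$; thus the orbits partition $V(G_{E_8})$ into 15 cliques of size 8.
   Context: The $E_8$ root system $\Psi_{E_8}\subset\mathbb{R}^8$ consists of the 240 vectors $\pm e_i\pm e_j$ ($1\le i<j\le 8$) and all $x\in\{\pm1\}^8$ with $\prod_i x_i=1$. $G_{E_8}$ is the graph with vertices $v_x$, $x\in\Psi_{E_8}$, where $v_x=v_{-x}$, and $v_x\sim v_y$ iff $\langle x,y\rangle=0$. Let $I=\mathrm{diag}(1,1)$, $X=\begin{pmatrix}0&1\\1&0\end{pmatrix}$, $Z=\mathrm{diag}(1,-1)$, $Y=XZ$. For $M=M_1\otimes M_2\otimes M_3$ with $M_i\in\{I,X,Y,Z\}$, $\sigma_M:v_x\mapsto v_{Mx}$ is an automorphism of $G_{E_8}$, and $L=\{\sigma_M\}\cong\mathbb{Z}_2^6$ is the resulting subgroup of $\mathrm{Aut}(G_{E_8})$. *)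

theory Defs
  imports Main
begin

text \<open>Vectors of R^8 with integer entries (all E8 roots in the given coordinates are integral)
  are represented as int lists of length 8; coordinate x_{k+1} is the list entry k.
  8x8 and 2x2 matrices are functions nat => nat => int (indices from 0).\<close>

definition inner8 :: "int list \<Rightarrow> int list \<Rightarrow> int" where
  "inner8 x y = (\<Sum>k<8. x ! k * y ! k)"

definition E8_roots :: "int list set" where
  "E8_roots =
     {map (\<lambda>k. if k = i then s else if k = j then t else 0) [0..<8] | i j s t.
        i < j \<and> j < 8 \<and> s \<in> {1, -1} \<and> t \<in> {1, -1}}
   \<union> {x. length x = 8 \<and> set x \<subseteq> {1, -1} \<and> prod_list x = 1}"

definition vtx :: "int list \<Rightarrow> int list set" where
  "vtx x = {x, map uminus x}"

definition E8_vertices :: "int list set set" where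
  "E8_vertices = vtx ` E8_roots"

text \<open>v_x ~ v_y iff <x,y> = 0 (independent of the chosen representatives).\<close>
definition E8_adj :: "int list set \<Rightarrow> int list set \<Rightarrow> bool" where
  "E8_adj u v = (\<exists>x y. u = vtx x \<and> v = vtx y \<and> x \<in> E8_roots \<and> y \<in> E8_roots \<and> inner8 x y = 0)"

definition is_clique :: "int list set set \<Rightarrow> bool" where
  "is_clique C = (C \<subseteq> E8_vertices \<and> (\<forall>u\<in>C. \<forall>v\<in>C. u \<noteq> v \<longrightarrow> E8_adj u v))"

definition pI :: "nat \<Rightarrow> nat \<Rightarrow> int" where "pI i j = (if i = j then 1 else 0)"
definition pX :: "nat \<Rightarrow> nat \<Rightarrow> int" where "pX i j = (if i \<noteq> j then 1 else 0)"
definition pZ :: "nat \<Rightarrow> nat \<Rightarrow> int" where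
  "pZ i j = (if i = j then (if i = 0 then 1 else -1) else 0)"
definition pY :: "nat \<Rightarrow> nat \<Rightarrow> int" where "pY i j = (\<Sum>k<2. pX i k * pZ k j)"

definition paulis :: "(nat \<Rightarrow> nat \<Rightarrow> int) set" where
  "paulis = {pI, pX, pY, pZ}"

text \<open>Kronecker product M1 (x) M2 (x) M3, rows/columns indexed by i = 4 i1 + 2 i2 + i3.\<close>
definition kron3 :: "(nat \<Rightarrow> nat \<Rightarrow> int) \<Rightarrow> (nat \<Rightarrow> nat \<Rightarrow> int) \<Rightarrow> (nat \<Rightarrow> nat \<Rightarrow> int)
    \<Rightarrow> nat \<Rightarrow> nat \<Rightarrow> int" where
  "kron3 A B C i j = A (i div 4) (j div 4) * B ((i div 2) mod 2) ((j div 2) mod 2)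
      * C (i mod 2) (j mod 2)"

definition mat_vec8 :: "(nat \<Rightarrow> nat \<Rightarrow> int) \<Rightarrow> int list \<Rightarrow> int list" where
  "mat_vec8 M x = map (\<lambda>i. \<Sum>j<8. M i j * x ! j) [0..<8]"

definition sigma :: "(nat \<Rightarrow> nat \<Rightarrow> int) \<Rightarrow> int list set \<Rightarrow> int list set" where
  "sigma M v = mat_vec8 M ` v"

definition L_group :: "(int list set \<Rightarrow> int list set) set" where
  "L_group = {sigma (kron3 A B C) | A B C. A \<in> paulis \<and> B \<in> paulis \<and> C \<in> paulis}"

definition L_orbit :: "int list set \<Rightarrow> int list set set" where
  "L_orbit v = {g v | g. g \<in> L_group}"

definition L_orbits :: "int list set set set" where
  "L_orbits = L_orbit ` E8_vertices"

end

theory Submission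
  imports Defs
begin

definition P64 :: "(nat \<times> int) list list" where
  "P64 = [[(0,1),(1,1),(2,1),(3,1),(4,1),(5,1),(6,1),(7,1)],
    [(1,1),(0,1),(3,1),(2,1),(5,1),(4,1),(7,1),(6,1)],
    [(1,-1),(0,1),(3,-1),(2,1),(5,-1),(4,1),(7,-1),(6,1)],
    [(0,1),(1,-1),(2,1),(3,-1),(4,1),(5,-1),(6,1),(7,-1)],
    [(2,1),(3,1),(0,1),(1,1),(6,1),(7,1),(4,1),(5,1)],
    [(3,1),(2,1),(1,1),(0,1),(7,1),(6,1),(5,1),(4,1)],
    [(3,-1),(2,1),(1,-1),(0,1),(7,-1),(6,1),(5,-1),(4,1)],
    [(2,1),(3,-1),(0,1),(1,-1),(6,1),(7,-1),(4,1),(5,-1)],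
    [(2,-1),(3,-1),(0,1),(1,1),(6,-1),(7,-1),(4,1),(5,1)],
    [(3,-1),(2,-1),(1,1),(0,1),(7,-1),(6,-1),(5,1),(4,1)],
    [(3,1),(2,-1),(1,-1),(0,1),(7,1),(6,-1),(5,-1),(4,1)],
    [(2,-1),(3,1),(0,1),(1,-1),(6,-1),(7,1),(4,1),(5,-1)],
    [(0,1),(1,1),(2,-1),(3,-1),(4,1),(5,1),(6,-1),(7,-1)],
    [(1,1),(0,1),(3,-1),(2,-1),(5,1),(4,1),(7,-1),(6,-1)],
    [(1,-1),(0,1),(3,1),(2,-1),(5,-1),(4,1),(7,1),(6,-1)],
    [(0,1),(1,-1),(2,-1),(3,1),(4,1),(5,-1),(6,-1),(7,1)],
    [(4,1),(5,1),(6,1),(7,1),(0,1),(1,1),(2,1),(3,1)],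
    [(5,1),(4,1),(7,1),(6,1),(1,1),(0,1),(3,1),(2,1)],
    [(5,-1),(4,1),(7,-1),(6,1),(1,-1),(0,1),(3,-1),(2,1)],
    [(4,1),(5,-1),(6,1),(7,-1),(0,1),(1,-1),(2,1),(3,-1)],
    [(6,1),(7,1),(4,1),(5,1),(2,1),(3,1),(0,1),(1,1)],
    [(7,1),(6,1),(5,1),(4,1),(3,1),(2,1),(1,1),(0,1)],
    [(7,-1),(6,1),(5,-1),(4,1),(3,-1),(2,1),(1,-1),(0,1)],
    [(6,1),(7,-1),(4,1),(5,-1),(2,1),(3,-1),(0,1),(1,-1)],
    [(6,-1),(7,-1),(4,1),(5,1),(2,-1),(3,-1),(0,1),(1,1)],
    [(7,-1),(6,-1),(5,1),(4,1),(3,-1),(2,-1),(1,1),(0,1)],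
    [(7,1),(6,-1),(5,-1),(4,1),(3,1),(2,-1),(1,-1),(0,1)],
    [(6,-1),(7,1),(4,1),(5,-1),(2,-1),(3,1),(0,1),(1,-1)],
    [(4,1),(5,1),(6,-1),(7,-1),(0,1),(1,1),(2,-1),(3,-1)],
    [(5,1),(4,1),(7,-1),(6,-1),(1,1),(0,1),(3,-1),(2,-1)],
    [(5,-1),(4,1),(7,1),(6,-1),(1,-1),(0,1),(3,1),(2,-1)],
    [(4,1),(5,-1),(6,-1),(7,1),(0,1),(1,-1),(2,-1),(3,1)],
    [(4,-1),(5,-1),(6,-1),(7,-1),(0,1),(1,1),(2,1),(3,1)],
    [(5,-1),(4,-1),(7,-1),(6,-1),(1,1),(0,1),(3,1),(2,1)],
    [(5,1),(4,-1),(7,1),(6,-1),(1,-1),(0,1),(3,-1),(2,1)],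
    [(4,-1),(5,1),(6,-1),(7,1),(0,1),(1,-1),(2,1),(3,-1)],
    [(6,-1),(7,-1),(4,-1),(5,-1),(2,1),(3,1),(0,1),(1,1)],
    [(7,-1),(6,-1),(5,-1),(4,-1),(3,1),(2,1),(1,1),(0,1)],
    [(7,1),(6,-1),(5,1),(4,-1),(3,-1),(2,1),(1,-1),(0,1)],
    [(6,-1),(7,1),(4,-1),(5,1),(2,1),(3,-1),(0,1),(1,-1)],
    [(6,1),(7,1),(4,-1),(5,-1),(2,-1),(3,-1),(0,1),(1,1)],
    [(7,1),(6,1),(5,-1),(4,-1),(3,-1),(2,-1),(1,1),(0,1)],
    [(7,-1),(6,1),(5,1),(4,-1),(3,1),(2,-1),(1,-1),(0,1)],
    [(6,1),(7,-1),(4,-1),(5,1),(2,-1),(3,1),(0,1),(1,-1)],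
    [(4,-1),(5,-1),(6,1),(7,1),(0,1),(1,1),(2,-1),(3,-1)],
    [(5,-1),(4,-1),(7,1),(6,1),(1,1),(0,1),(3,-1),(2,-1)],
    [(5,1),(4,-1),(7,-1),(6,1),(1,-1),(0,1),(3,1),(2,-1)],
    [(4,-1),(5,1),(6,1),(7,-1),(0,1),(1,-1),(2,-1),(3,1)],
    [(0,1),(1,1),(2,1),(3,1),(4,-1),(5,-1),(6,-1),(7,-1)],
    [(1,1),(0,1),(3,1),(2,1),(5,-1),(4,-1),(7,-1),(6,-1)],
    [(1,-1),(0,1),(3,-1),(2,1),(5,1),(4,-1),(7,1),(6,-1)],
    [(0,1),(1,-1),(2,1),(3,-1),(4,-1),(5,1),(6,-1),(7,1)],
    [(2,1),(3,1),(0,1),(1,1),(6,-1),(7,-1),(4,-1),(5,-1)],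
    [(3,1),(2,1),(1,1),(0,1),(7,-1),(6,-1),(5,-1),(4,-1)],
    [(3,-1),(2,1),(1,-1),(0,1),(7,1),(6,-1),(5,1),(4,-1)],
    [(2,1),(3,-1),(0,1),(1,-1),(6,-1),(7,1),(4,-1),(5,1)],
    [(2,-1),(3,-1),(0,1),(1,1),(6,1),(7,1),(4,-1),(5,-1)],
    [(3,-1),(2,-1),(1,1),(0,1),(7,1),(6,1),(5,-1),(4,-1)],
    [(3,1),(2,-1),(1,-1),(0,1),(7,-1),(6,1),(5,1),(4,-1)],
    [(2,-1),(3,1),(0,1),(1,-1),(6,1),(7,-1),(4,-1),(5,1)],
    [(0,1),(1,1),(2,-1),(3,-1),(4,-1),(5,-1),(6,1),(7,1)],
    [(1,1),(0,1),(3,-1),(2,-1),(5,-1),(4,-1),(7,1),(6,1)],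
    [(1,-1),(0,1),(3,1),(2,-1),(5,1),(4,-1),(7,-1),(6,1)],
    [(0,1),(1,-1),(2,-1),(3,1),(4,-1),(5,1),(6,1),(7,-1)]]"

definition Q0 :: "int list list" where "Q0 = [[1,1,1,1,1,1,1,1],[1,-1,1,-1,1,-1,1,-1],[1,1,-1,-1,1,1,-1,-1],[1,-1,-1,1,1,-1,-1,1],[1,1,1,1,-1,-1,-1,-1],[1,-1,1,-1,-1,1,-1,1],[1,1,-1,-1,-1,-1,1,1],[1,-1,-1,1,-1,1,1,-1]]"
definition Q1 :: "int list list" where "Q1 = [[1,1,1,1,1,1,-1,-1],[1,-1,1,-1,1,-1,-1,1],[1,1,1,1,-1,-1,1,1],[1,-1,1,-1,-1,1,1,-1],[1,1,-1,-1,-1,-1,-1,-1],[1,-1,-1,1,-1,1,-1,1],[1,1,-1,-1,1,1,1,1],[1,-1,-1,1,1,-1,1,-1]]"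
definition Q2 :: "int list list" where "Q2 = [[1,1,1,1,1,-1,1,-1],[1,1,1,1,-1,1,-1,1],[1,-1,1,-1,-1,-1,-1,-1],[1,-1,1,-1,1,1,1,1],[1,1,-1,-1,1,-1,-1,1],[1,1,-1,-1,-1,1,1,-1],[1,-1,-1,1,-1,-1,1,1],[1,-1,-1,1,1,1,-1,-1]]"
definition Q3 :: "int list list" where "Q3 = [[1,1,1,1,1,-1,-1,1],[1,1,1,1,-1,1,1,-1],[1,-1,1,-1,-1,-1,1,1],[1,-1,1,-1,1,1,-1,-1],[1,1,-1,-1,-1,1,-1,1],[1,1,-1,-1,1,-1,1,-1],[1,-1,-1,1,1,1,1,1],[1,-1,-1,1,-1,-1,-1,-1]]"
definition Q4 :: "int list list" where "Q4 = [[1,1,1,-1,1,1,1,-1],[1,1,-1,1,1,1,-1,1],[1,-1,-1,-1,1,-1,-1,-1],[1,-1,1,1,1,-1,1,1],[1,1,1,-1,-1,-1,-1,1],[1,1,-1,1,-1,-1,1,-1],[1,-1,-1,-1,-1,1,1,1],[1,-1,1,1,-1,1,-1,-1]]"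
definition Q5 :: "int list list" where "Q5 = [[1,1,1,-1,1,1,-1,1],[1,1,-1,1,1,1,1,-1],[1,-1,-1,-1,1,-1,1,1],[1,-1,1,1,1,-1,-1,-1],[1,-1,1,1,-1,1,1,1],[1,-1,-1,-1,-1,1,-1,-1],[1,1,-1,1,-1,-1,-1,1],[1,1,1,-1,-1,-1,1,-1]]"
definition Q6 :: "int list list" where "Q6 = [[1,1,1,-1,1,-1,1,1],[1,1,-1,1,-1,1,1,1],[1,-1,-1,-1,-1,-1,1,-1],[1,-1,1,1,1,1,1,-1],[1,-1,-1,-1,1,1,-1,1],[1,-1,1,1,-1,-1,-1,1],[1,1,1,-1,-1,1,-1,-1],[1,1,-1,1,1,-1,-1,-1]]"
definition Q7 :: "int list list" where "Q7 = [[1,1,1,-1,1,-1,-1,-1],[1,1,-1,1,-1,1,-1,-1],[1,-1,-1,-1,-1,-1,-1,1],[1,-1,1,1,1,1,-1,1],[1,-1,1,1,-1,-1,1,-1],[1,-1,-1,-1,1,1,1,-1],[1,1,-1,1,1,-1,1,1],[1,1,1,-1,-1,1,1,1]]"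
definition Q8 :: "int list list" where "Q8 = [[1,1,0,0,0,0,0,0],[1,-1,0,0,0,0,0,0],[0,0,1,1,0,0,0,0],[0,0,1,-1,0,0,0,0],[0,0,0,0,1,1,0,0],[0,0,0,0,1,-1,0,0],[0,0,0,0,0,0,1,1],[0,0,0,0,0,0,1,-1]]"
definition Q9 :: "int list list" where "Q9 = [[1,0,1,0,0,0,0,0],[0,1,0,1,0,0,0,0],[1,0,-1,0,0,0,0,0],[0,1,0,-1,0,0,0,0],[0,0,0,0,1,0,1,0],[0,0,0,0,0,1,0,1],[0,0,0,0,1,0,-1,0],[0,0,0,0,0,1,0,-1]]"
definition Q10 :: "int list list" where "Q10 = [[1,0,0,1,0,0,0,0],[0,1,1,0,0,0,0,0],[0,1,-1,0,0,0,0,0],[1,0,0,-1,0,0,0,0],[0,0,0,0,1,0,0,1],[0,0,0,0,0,1,1,0],[0,0,0,0,0,1,-1,0],[0,0,0,0,1,0,0,-1]]"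
definition Q11 :: "int list list" where "Q11 = [[1,0,0,0,1,0,0,0],[0,1,0,0,0,1,0,0],[0,0,1,0,0,0,1,0],[0,0,0,1,0,0,0,1],[1,0,0,0,-1,0,0,0],[0,1,0,0,0,-1,0,0],[0,0,1,0,0,0,-1,0],[0,0,0,1,0,0,0,-1]]"
definition Q12 :: "int list list" where "Q12 = [[1,0,0,0,0,1,0,0],[0,1,0,0,1,0,0,0],[0,1,0,0,-1,0,0,0],[1,0,0,0,0,-1,0,0],[0,0,1,0,0,0,0,1],[0,0,0,1,0,0,1,0],[0,0,0,1,0,0,-1,0],[0,0,1,0,0,0,0,-1]]"
definition Q13 :: "int list list" where "Q13 = [[1,0,0,0,0,0,1,0],[0,1,0,0,0,0,0,1],[0,0,1,0,1,0,0,0],[0,0,0,1,0,1,0,0],[0,0,1,0,-1,0,0,0],[0,0,0,1,0,-1,0,0],[1,0,0,0,0,0,-1,0],[0,1,0,0,0,0,0,-1]]"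
definition Q14 :: "int list list" where "Q14 = [[1,0,0,0,0,0,0,1],[0,1,0,0,0,0,1,0],[0,1,0,0,0,0,-1,0],[1,0,0,0,0,0,0,-1],[0,0,1,0,0,1,0,0],[0,0,0,1,1,0,0,0],[0,0,0,1,-1,0,0,0],[0,0,1,0,0,-1,0,0]]"
definition OL :: "int list list list" where "OL = [Q0,Q1,Q2,Q3,Q4,Q5,Q6,Q7,Q8,Q9,Q10,Q11,Q12,Q13,Q14]"
definition app :: "(nat \<times> int) list \<Rightarrow> int list \<Rightarrow> int list" where
  "app p x = map (\<lambda>(k,s). s * x ! k) p"

fun pa :: "nat \<Rightarrow> nat \<Rightarrow> nat \<Rightarrow> int" where
  "pa 0 = pI" | "pa (Suc 0) = pX" | "pa (Suc (Suc 0)) = pY" | "pa _ = pZ"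

lemma sum8: "(\<Sum>j<(8::nat). f j) = f 0 + f 1 + f 2 + f 3 + f 4 + f 5 + f 6 + (f 7::int)"
  by (simp add: numeral_eq_Suc lessThan_Suc)

lemma upt8: "[0..<8] = [0,1,2,3,4,5,6,7]"
  by (simp add: numeral_eq_Suc upt_rec)

lemma pY_eq: "pY i j = (if i \<noteq> 0 \<and> j = 0 then 1 else 0) - (if i \<noteq> 1 \<and> j = 1 then 1 else 0)"
  by (simp add: pY_def pX_def pZ_def numeral_2_eq_2 lessThan_Suc)

lemma mv_app: "a < 4 \<Longrightarrow> b < 4 \<Longrightarrow> c < 4 \<Longrightarrow>
  mat_vec8 (kron3 (pa a) (pa b) (pa c)) x = app (P64 ! (16*a+4*b+c)) x"
  apply (simp add: less_Suc_eq numeral_eq_Suc del: pa.simps)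
  apply (elim disjE)
  apply (simp_all add: mat_vec8_def kron3_def sum8 upt8 app_def P64_def pI_def pX_def pY_eq pZ_def)
  done
fun apps :: "(nat \<times> int) list list \<Rightarrow> int list \<Rightarrow> int list list" where
  "apps [] r = []"
| "apps (p # ps) r = app p r # apps ps r"

fun leq :: "int list \<Rightarrow> int list \<Rightarrow> bool" where
  "leq [] ys = (ys = [])"
| "leq (x # xs) [] = False"
| "leq (x # xs) (y # ys) = (if x = y then leq xs ys else False)"

lemma leq_iff: "leq xs ys = (xs = ys)"
  by (induction xs ys rule: leq.induct) auto

fun memb :: "int list \<Rightarrow> int list list \<Rightarrow> bool" where
  "memb a [] = False"
| "memb a (b # B) = (if leq a b then True else memb a B)"

lemma memb_iff: "memb a B = (a \<in> set B)"
  by (induction B) (auto simp: leq_iff)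

fun vsub :: "int list list \<Rightarrow> int list list \<Rightarrow> bool" where
  "vsub [] B = True"
| "vsub (a # A) B = (if memb a B then vsub A B else if memb (map uminus a) B then vsub A B else False)"

fun orbchk :: "int list list \<Rightarrow> int list list \<Rightarrow> bool" where
  "orbchk Q [] = True"
| "orbchk Q (r # rs) = (if vsub (apps P64 r) Q then (if vsub Q (apps P64 r) then orbchk Q rs else False) else False)"

lemma apps_sym: "apps P64 [a0,a1,a2,a3,a4,a5,a6,a7] =
   [[a0, a1, a2, a3, a4, a5, a6, a7],
    [a1, a0, a3, a2, a5, a4, a7, a6],
    [- a1, a0, - a3, a2, - a5, a4, - a7, a6],
    [a0, - a1, a2, - a3, a4, - a5, a6, - a7],
    [a2, a3, a0, a1, a6, a7, a4, a5],
    [a3, a2, a1, a0, a7, a6, a5, a4],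
    [- a3, a2, - a1, a0, - a7, a6, - a5, a4],
    [a2, - a3, a0, - a1, a6, - a7, a4, - a5],
    [- a2, - a3, a0, a1, - a6, - a7, a4, a5],
    [- a3, - a2, a1, a0, - a7, - a6, a5, a4],
    [a3, - a2, - a1, a0, a7, - a6, - a5, a4],
    [- a2, a3, a0, - a1, - a6, a7, a4, - a5],
    [a0, a1, - a2, - a3, a4, a5, - a6, - a7],
    [a1, a0, - a3, - a2, a5, a4, - a7, - a6],
    [- a1, a0, a3, - a2, - a5, a4, a7, - a6],
    [a0, - a1, - a2, a3, a4, - a5, - a6, a7],
    [a4, a5, a6, a7, a0, a1, a2, a3],
    [a5, a4, a7, a6, a1, a0, a3, a2],
    [- a5, a4, - a7, a6, - a1, a0, - a3, a2],
    [a4, - a5, a6, - a7, a0, - a1, a2, - a3],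
    [a6, a7, a4, a5, a2, a3, a0, a1],
    [a7, a6, a5, a4, a3, a2, a1, a0],
    [- a7, a6, - a5, a4, - a3, a2, - a1, a0],
    [a6, - a7, a4, - a5, a2, - a3, a0, - a1],
    [- a6, - a7, a4, a5, - a2, - a3, a0, a1],
    [- a7, - a6, a5, a4, - a3, - a2, a1, a0],
    [a7, - a6, - a5, a4, a3, - a2, - a1, a0],
    [- a6, a7, a4, - a5, - a2, a3, a0, - a1],
    [a4, a5, - a6, - a7, a0, a1, - a2, - a3],
    [a5, a4, - a7, - a6, a1, a0, - a3, - a2],
    [- a5, a4, a7, - a6, - a1, a0, a3, - a2],
    [a4, - a5, - a6, a7, a0, - a1, - a2, a3],
    [- a4, - a5, - a6, - a7, a0, a1, a2, a3],
    [- a5, - a4, - a7, - a6, a1, a0, a3, a2],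
    [a5, - a4, a7, - a6, - a1, a0, - a3, a2],
    [- a4, a5, - a6, a7, a0, - a1, a2, - a3],
    [- a6, - a7, - a4, - a5, a2, a3, a0, a1],
    [- a7, - a6, - a5, - a4, a3, a2, a1, a0],
    [a7, - a6, a5, - a4, - a3, a2, - a1, a0],
    [- a6, a7, - a4, a5, a2, - a3, a0, - a1],
    [a6, a7, - a4, - a5, - a2, - a3, a0, a1],
    [a7, a6, - a5, - a4, - a3, - a2, a1, a0],
    [- a7, a6, a5, - a4, a3, - a2, - a1, a0],
    [a6, - a7, - a4, a5, - a2, a3, a0, - a1],
    [- a4, - a5, a6, a7, a0, a1, - a2, - a3],
    [- a5, - a4, a7, a6, a1, a0, - a3, - a2],
    [a5, - a4, - a7, a6, - a1, a0, a3, - a2],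
    [- a4, a5, a6, - a7, a0, - a1, - a2, a3],
    [a0, a1, a2, a3, - a4, - a5, - a6, - a7],
    [a1, a0, a3, a2, - a5, - a4, - a7, - a6],
    [- a1, a0, - a3, a2, a5, - a4, a7, - a6],
    [a0, - a1, a2, - a3, - a4, a5, - a6, a7],
    [a2, a3, a0, a1, - a6, - a7, - a4, - a5],
    [a3, a2, a1, a0, - a7, - a6, - a5, - a4],
    [- a3, a2, - a1, a0, a7, - a6, a5, - a4],
    [a2, - a3, a0, - a1, - a6, a7, - a4, a5],
    [- a2, - a3, a0, a1, a6, a7, - a4, - a5],
    [- a3, - a2, a1, a0, a7, a6, - a5, - a4],
    [a3, - a2, - a1, a0, - a7, a6, a5, - a4],
    [- a2, a3, a0, - a1, a6, - a7, - a4, a5],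
    [a0, a1, - a2, - a3, - a4, - a5, a6, a7],
    [a1, a0, - a3, - a2, - a5, - a4, a7, a6],
    [- a1, a0, a3, - a2, a5, - a4, - a7, a6],
    [a0, - a1, - a2, a3, - a4, a5, a6, - a7]]"
  by (simp add: P64_def app_def)


lemma apps_map: "apps ps r = map (\<lambda>p. app p r) ps"
  by (induction ps) auto

lemma vtx_neg: "vtx (map uminus a) = vtx a"
  by (auto simp: vtx_def comp_def)

lemma vtx_eqD: "vtx x = vtx y \<Longrightarrow> y = x \<or> y = map uminus x"
  by (auto simp: vtx_def doubleton_eq_iff)

lemma vsub_sound: "vsub A B \<Longrightarrow> a \<in> set A \<Longrightarrow> a \<in> set B \<or> map uminus a \<in> set B"
  by (induction A B rule: vsub.induct) (auto simp: memb_iff split: if_splits)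

lemma vsub_img: "vsub A B \<Longrightarrow> vtx ` set A \<subseteq> vtx ` set B"
proof
  fix v assume "vsub A B" "v \<in> vtx ` set A"
  then obtain a where a: "a \<in> set A" "v = vtx a" by auto
  from vsub_sound[OF \<open>vsub A B\<close> a(1)] show "v \<in> vtx ` set B"
  proof
    assume "a \<in> set B" thus ?thesis using a by auto
  next
    assume "map uminus a \<in> set B"
    hence "vtx (map uminus a) \<in> vtx ` set B" by auto
    thus ?thesis using a vtx_neg by simp
  qed
qed

lemma vsub_eq: "vsub A B \<Longrightarrow> vsub B A \<Longrightarrow> vtx ` set A = vtx ` set B"
  using vsub_img by blast

lemma orbchk_iff: "orbchk Q rs = (\<forall>r\<in>set rs. vsub (apps P64 r) Q \<and> vsub Q (apps P64 r))"
  by (induction Q rs rule: orbchk.induct) auto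

lemma orbchk_sound: "orbchk Q rs \<Longrightarrow> r \<in> set rs \<Longrightarrow> vtx ` set (apps P64 r) = vtx ` set Q"
  unfolding orbchk_iff using vsub_eq by blast

lemma paulis_eq: "paulis = pa ` {..<4}"
proof -
  have "{..<4::nat} = {0,1,2,3}" by auto
  thus ?thesis by (simp add: paulis_def eval_nat_numeral)
qed

lemma L_orbit_eq: "L_orbit v = (\<lambda>(a,b,c). sigma (kron3 (pa a) (pa b) (pa c)) v) ` ({..<4} \<times> {..<4} \<times> {..<4})" (is "_ = ?R")
proof
  show "L_orbit v \<subseteq> ?R"
  proof
    fix w assume "w \<in> L_orbit v"
    then obtain A B C where "A \<in> pa ` {..<4}" "B \<in> pa ` {..<4}" "C \<in> pa ` {..<4}"
      and w: "w = sigma (kron3 A B C) v"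
      unfolding L_orbit_def L_group_def paulis_eq by blast
    then obtain a b c where "a < 4" "b < 4" "c < 4" "A = pa a" "B = pa b" "C = pa c" by blast
    thus "w \<in> ?R" using w by (intro image_eqI[where x = "(a,b,c)"]) simp_all
  qed
next
  show "?R \<subseteq> L_orbit v"
  proof
    fix w assume "w \<in> ?R"
    then obtain a b c where abc: "a < 4" "b < 4" "c < 4" and w: "w = sigma (kron3 (pa a) (pa b) (pa c)) v"
      by auto
    have "sigma (kron3 (pa a) (pa b) (pa c)) \<in> L_group"
      unfolding L_group_def paulis_eq using abc by blast
    thus "w \<in> L_orbit v" unfolding L_orbit_def w by blast
  qed
qed

lemma mv_neg: "length r = 8 \<Longrightarrow> mat_vec8 M (map uminus r) = map uminus (mat_vec8 M r)"
proof -
  assume r: "length r = 8"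
  have "(\<Sum>j<8. M i j * map uminus r ! j) = - (\<Sum>j<8. M i j * r ! j)" for i
  proof -
    have "(\<Sum>j<8. M i j * map uminus r ! j) = (\<Sum>j<8. - (M i j * r ! j))"
      by (rule sum.cong) (simp_all add: r)
    also have "\<dots> = - (\<Sum>j<8. M i j * r ! j)" by (simp add: sum_negf)
    finally show ?thesis .
  qed
  thus ?thesis by (simp add: mat_vec8_def)
qed

lemma sigma_vtx: "length r = 8 \<Longrightarrow> sigma M (vtx r) = vtx (mat_vec8 M r)"
  by (simp add: sigma_def vtx_def mv_neg)

lemma len_P64: "length P64 = 64" by (simp add: P64_def)

lemma idx_img: "(\<lambda>(a,b,c). P64 ! (16*a+4*b+c)) ` ({..<4} \<times> {..<4} \<times> {..<4}) = set P64"
proof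
  show "(\<lambda>(a,b,c). P64 ! (16*a+4*b+c)) ` ({..<4} \<times> {..<4} \<times> {..<4}) \<subseteq> set P64"
    using len_P64 by auto
next
  show "set P64 \<subseteq> (\<lambda>(a,b,c). P64 ! (16*a+4*b+c)) ` ({..<4} \<times> {..<4} \<times> {..<4})"
  proof
    fix p assume "p \<in> set P64"
    then obtain i where i: "i < 64" "p = P64 ! i" using len_P64 by (auto simp: in_set_conv_nth)
    have e1: "i = 4 * (i div 4) + i mod 4" by simp
    have e2: "i div 4 = 4 * (i div 4 div 4) + i div 4 mod 4" by simp
    have e3: "i div 4 div 4 = i div 16" by (simp add: div_mult2_eq)
    have "i = 16 * (i div 16) + 4 * ((i div 4) mod 4) + i mod 4" using e1 e2 e3 by linarith
    moreover have "i div 16 < 4" "(i div 4) mod 4 < 4" "i mod 4 < (4::nat)" using i by auto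
    ultimately show "p \<in> (\<lambda>(a,b,c). P64 ! (16*a+4*b+c)) ` ({..<4} \<times> {..<4} \<times> {..<4})"
      using i by (auto intro!: image_eqI[where x = "(i div 16, (i div 4) mod 4, i mod 4)"])
  qed
qed

lemma L_orbit_vtx: "length r = 8 \<Longrightarrow> L_orbit (vtx r) = vtx ` set (apps P64 r)"
proof -
  assume r: "length r = 8"
  have "L_orbit (vtx r) = (\<lambda>(a,b,c). vtx (app (P64 ! (16*a+4*b+c)) r)) ` ({..<4} \<times> {..<4} \<times> {..<4})"
    unfolding L_orbit_eq using r by (intro image_cong) (auto simp: sigma_vtx mv_app)
  also have "\<dots> = (\<lambda>p. vtx (app p r)) ` ((\<lambda>(a,b,c). P64 ! (16*a+4*b+c)) ` ({..<4} \<times> {..<4} \<times> {..<4}))"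
    by (simp add: image_image case_prod_beta)
  also have "\<dots> = vtx ` set (apps P64 r)"
    by (simp add: idx_img apps_map image_image)
  finally show ?thesis .
qed

definition rt :: "nat \<Rightarrow> nat \<Rightarrow> int \<Rightarrow> int \<Rightarrow> int list" where
  "rt i j s t = map (\<lambda>k. if k = i then s else if k = j then t else 0) [0..<8]"

definition T1 :: "int list list" where
  "T1 = concat (map (\<lambda>j. concat (map (\<lambda>i. concat (map (\<lambda>s. map (\<lambda>t. rt i j s t) [1,-1]) [1,-1])) [0..<j])) [0..<8])"

lemma T1_mem: "x \<in> set T1 \<longleftrightarrow> (\<exists>j<8. \<exists>i<j. \<exists>s\<in>{1,-1}. \<exists>t\<in>{1,-1}. x = rt i j s t)"
  by (simp add: T1_def atLeast0LessThan Bex_def) blast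

definition T2 :: "int list list" where
  "T2 = filter (\<lambda>x. prod_list x = 1) (List.n_lists 8 [1,-1])"

lemma roots1: "{rt i j s t | i j s t.
        i < j \<and> j < 8 \<and> s \<in> {1, -1} \<and> t \<in> {1, -1}} = set T1"
  by (rule set_eqI, unfold T1_mem mem_Collect_eq, blast)

lemma roots2: "{x. length x = 8 \<and> set x \<subseteq> {1, -1} \<and> prod_list x = (1::int)} = set T2"
  unfolding T2_def by (auto simp: set_n_lists)

lemma roots_eq: "E8_roots = set (T1 @ T2)"
  unfolding E8_roots_def rt_def[symmetric] roots1 roots2 by simp

definition ip :: "int list \<Rightarrow> int list \<Rightarrow> int" where
  "ip x y = x!0*y!0 + x!1*y!1 + x!2*y!2 + x!3*y!3 + x!4*y!4 + x!5*y!5 + x!6*y!6 + x!7*y!7"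

lemma inner8_ip: "inner8 x y = ip x y"
  by (simp add: inner8_def ip_def sum8)

definition U :: "int list list" where "U = concat OL"

lemma ck2: "distinct (U @ map (map uminus) U)"
  unfolding U_def by code_simp

lemma ck3: "list_all (\<lambda>Q. length Q = 8 \<and> list_all (\<lambda>x. length x = 8 \<and> list_all (\<lambda>y. x = y \<or> ip x y = 0) Q) Q) OL"
  by code_simp

lemma ck4: "distinct OL \<and> length OL = 15"
  by code_simp

lemma ck5: "vsub (T1 @ T2) U \<and> list_all (\<lambda>x. memb x (T1 @ T2)) U"
  unfolding U_def by code_simp

lemma ck1: "list_all (\<lambda>Q. orbchk Q Q) OL"
  by code_simp

theorem lemma3p4:
  shows "card L_orbits = 15
    \<and> (\<forall>C\<in>L_orbits. card C = 8 \<and> is_clique C)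
    \<and> \<Union> L_orbits = E8_vertices
    \<and> (\<forall>O1\<in>L_orbits. \<forall>O2\<in>L_orbits. O1 \<noteq> O2 \<longrightarrow> O1 \<inter> O2 = {})"
proof -
  have c3: "\<And>Q. Q \<in> set OL \<Longrightarrow> length Q = 8 \<and> (\<forall>x\<in>set Q. length x = 8 \<and> (\<forall>y\<in>set Q. x = y \<or> ip x y = 0))"
    using ck3 by (simp add: list_all_iff)
  have U_iff: "x \<in> set U \<longleftrightarrow> (\<exists>Q\<in>set OL. x \<in> set Q)" for x
    by (simp add: U_def)
  have U8: "\<And>x. x \<in> set U \<Longrightarrow> length x = 8"
    using c3 U_iff by blast
  have orb: "\<And>Q r. Q \<in> set OL \<Longrightarrow> r \<in> set Q \<Longrightarrow> L_orbit (vtx r) = vtx ` set Q"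
  proof -
    fix Q r assume Q: "Q \<in> set OL" and r: "r \<in> set Q"
    have "orbchk Q Q" using ck1 Q by (simp add: list_all_iff)
    hence "vtx ` set (apps P64 r) = vtx ` set Q" using orbchk_sound r by blast
    moreover have "length r = 8" using c3 Q r by blast
    ultimately show "L_orbit (vtx r) = vtx ` set Q" using L_orbit_vtx by simp
  qed
  have Uroots: "set U \<subseteq> E8_roots"
    using ck5 by (auto simp: roots_eq list_all_iff memb_iff)
  have vert: "E8_vertices = vtx ` set U"
  proof
    show "E8_vertices \<subseteq> vtx ` set U"
      unfolding E8_vertices_def roots_eq using ck5 vsub_img by blast
    show "vtx ` set U \<subseteq> E8_vertices"
      unfolding E8_vertices_def using Uroots by blast
  qed
  have orbs: "L_orbits = (\<lambda>Q. vtx ` set Q) ` set OL"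
  proof
    show "L_orbits \<subseteq> (\<lambda>Q. vtx ` set Q) ` set OL"
    proof
      fix C assume "C \<in> L_orbits"
      then obtain x where x: "x \<in> set U" "C = L_orbit (vtx x)" unfolding L_orbits_def vert by blast
      then obtain Q where Q: "Q \<in> set OL" "x \<in> set Q" using U_iff by blast
      thus "C \<in> (\<lambda>Q. vtx ` set Q) ` set OL" using orb x by blast
    qed
  next
    show "(\<lambda>Q. vtx ` set Q) ` set OL \<subseteq> L_orbits"
    proof
      fix C assume "C \<in> (\<lambda>Q. vtx ` set Q) ` set OL"
      then obtain Q where Q: "Q \<in> set OL" "C = vtx ` set Q" by blast
      have "Q \<noteq> []" using c3 Q(1) by fastforce
      hence h: "hd Q \<in> set Q" by simp
      hence "hd Q \<in> set U" using U_iff Q by blast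
      moreover have "C = L_orbit (vtx (hd Q))" using orb Q h by simp
      ultimately show "C \<in> L_orbits" unfolding L_orbits_def vert by blast
    qed
  qed
  have inj: "\<And>x y. x \<in> set U \<Longrightarrow> y \<in> set U \<Longrightarrow> vtx x = vtx y \<Longrightarrow> x = y"
  proof -
    fix x y assume xy: "x \<in> set U" "y \<in> set U" "vtx x = vtx y"
    have disj: "set U \<inter> set (map (map uminus) U) = {}" using ck2 by simp
    from vtx_eqD[OF xy(3)] show "x = y"
    proof
      assume "y = map uminus x"
      hence "y \<in> set (map (map uminus) U)" using xy(1) by simp
      thus ?thesis using disj xy(2) by blast
    qed simp
  qed
  have dU: "distinct (concat OL)" using ck2 by (simp add: U_def)
  have dQ: "\<And>Q. Q \<in> set OL \<Longrightarrow> distinct Q"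
    using dU unfolding distinct_concat_iff by blast
  have dj: "\<And>Q1 Q2. Q1 \<in> set OL \<Longrightarrow> Q2 \<in> set OL \<Longrightarrow> Q1 \<noteq> Q2 \<Longrightarrow> set Q1 \<inter> set Q2 = {}"
    using dU unfolding distinct_concat_iff by blast
  have QU: "\<And>Q. Q \<in> set OL \<Longrightarrow> set Q \<subseteq> set U" using U_iff by blast
  have disjO: "\<And>Q1 Q2. Q1 \<in> set OL \<Longrightarrow> Q2 \<in> set OL \<Longrightarrow> Q1 \<noteq> Q2 \<Longrightarrow> vtx ` set Q1 \<inter> vtx ` set Q2 = {}"
  proof -
    fix Q1 Q2 assume Q: "Q1 \<in> set OL" "Q2 \<in> set OL" "Q1 \<noteq> Q2"
    show "vtx ` set Q1 \<inter> vtx ` set Q2 = {}"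
    proof (rule ccontr)
      assume "vtx ` set Q1 \<inter> vtx ` set Q2 \<noteq> {}"
      then obtain x y where xy: "x \<in> set Q1" "y \<in> set Q2" "vtx x = vtx y" by blast
      hence "x = y" using inj QU Q by blast
      thus False using dj[OF Q] xy by blast
    qed
  qed
  have card8: "\<And>Q. Q \<in> set OL \<Longrightarrow> card (vtx ` set Q) = 8"
  proof -
    fix Q assume Q: "Q \<in> set OL"
    have "inj_on vtx (set Q)" using inj QU[OF Q] by (meson inj_onI subsetD)
    hence "card (vtx ` set Q) = card (set Q)" by (rule card_image)
    also have "\<dots> = length Q" using dQ[OF Q] by (rule distinct_card)
    finally show "card (vtx ` set Q) = 8" using c3 Q by simp
  qed
  have clique: "\<And>Q. Q \<in> set OL \<Longrightarrow> is_clique (vtx ` set Q)"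
  proof -
    fix Q assume Q: "Q \<in> set OL"
    have sub: "vtx ` set Q \<subseteq> E8_vertices" using QU[OF Q] vert by blast
    have "\<forall>u\<in>vtx ` set Q. \<forall>v\<in>vtx ` set Q. u \<noteq> v \<longrightarrow> E8_adj u v"
    proof (intro ballI impI)
      fix u v assume "u \<in> vtx ` set Q" "v \<in> vtx ` set Q" "u \<noteq> v"
      then obtain x y where xy: "x \<in> set Q" "y \<in> set Q" "u = vtx x" "v = vtx y" "x \<noteq> y" by blast
      hence "ip x y = 0" using c3 Q by blast
      hence "inner8 x y = 0" by (simp add: inner8_ip)
      moreover have "x \<in> E8_roots" "y \<in> E8_roots" using xy QU[OF Q] Uroots by blast+
      ultimately show "E8_adj u v" unfolding E8_adj_def using xy by blast
    qed
    thus "is_clique (vtx ` set Q)" using sub by (simp add: is_clique_def)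
  qed
  have injO: "inj_on (\<lambda>Q. vtx ` set Q) (set OL)"
  proof (rule inj_onI)
    fix Q1 Q2 assume Q: "Q1 \<in> set OL" "Q2 \<in> set OL" "vtx ` set Q1 = vtx ` set Q2"
    show "Q1 = Q2"
    proof (rule ccontr)
      assume "Q1 \<noteq> Q2"
      hence "vtx ` set Q1 \<inter> vtx ` set Q2 = {}" using disjO Q(1,2) by blast
      hence "vtx ` set Q1 = {}" using Q(3) by simp
      moreover have "card (vtx ` set Q1) = 8" using card8 Q by blast
      ultimately show False by simp
    qed
  qed
  have "card L_orbits = 15"
  proof -
    have "card L_orbits = card (set OL)" unfolding orbs by (rule card_image[OF injO])
    also have "\<dots> = length OL" using ck4 by (simp add: distinct_card)
    finally show ?thesis using ck4 by simp
  qed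
  moreover have "\<forall>C\<in>L_orbits. card C = 8 \<and> is_clique C"
    unfolding orbs using card8 clique by blast
  moreover have "\<Union> L_orbits = E8_vertices"
  proof -
    have "\<Union> L_orbits = (\<Union>Q\<in>set OL. vtx ` set Q)" unfolding orbs by blast
    also have "\<dots> = vtx ` set U" using U_iff by blast
    finally show ?thesis using vert by simp
  qed
  moreover have "\<forall>O1\<in>L_orbits. \<forall>O2\<in>L_orbits. O1 \<noteq> O2 \<longrightarrow> O1 \<inter> O2 = {}"
    unfolding orbs using disjO by blast
  ultimately show ?thesis by blast
qed

end
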